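(* Assume (A1) and let $S$ be the function $$S(x,t)=\begin{cases}\inf_{v\in\mathbb{R}^n}\{J(x-tv)+tH^*(v)\},& t>0,\\ (J^*+I_{\mathrm{dom}\,H})^*(x),& t=0,\\ +\infty,& t<0.\end{cases}$$ Then for every $(x,t)\in\mathrm{dom}\,S$, $$\partial S(x,t)=\begin{cases}\{(\bar p,-H(\bar p))\},& (x,t)\in\mathrm{int}\,\mathrm{dom}\,S,\\ \{(p,E^-)\in(\partial_xS(x,0)\cap\mathrm{dom}\,H)\times\mathbb{R}:\ E^-\le-H(p)\},& t=0,\\ \emptyset,&\text{otherwise (i.e. } t>0,\ (x,t)\notin\mathrm{int}\,\mathrm{dom}\,S),\end{cases}$$ where $\bar p$ is the unique maximizer of $p\mapsto\langle p,x\rangle-tH(p)-J^*(p)$ and $\partial_xS(x,0)$ is the subdifferential of $y\mapsto S(y,0)$ at $x$.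
   Context: $\Gamma_0(\mathbb{R}^n)$ denotes the set of proper, convex, lower semicontinuous functions $\mathbb{R}^n\to\mathbb{R}\cup\{+\infty\}$; $f^*$ is the Legendre–Fenchel transform; $I_C$ is the indicator function of a set $C$; $\partial$ denotes the convex subdifferential (for $S$, jointly in $(x,t)$). A function $g$ is 1-coercive if $g(x)/\|x\|\to+\infty$ as $\|x\|\to\infty$. A function $f\in\Gamma_0(\mathbb{R}^n)$ is Legendre if: $\mathrm{int}\,\mathrm{dom}\,f\neq\emptyset$; $f$ is differentiable on $\mathrm{int}\,\mathrm{dom}\,f$; $\partial f(x)=\emptyset$ for $x\in\mathrm{dom}\,f\setminus\mathrm{int}\,\mathrm{dom}\,f$ and $\partial f(x)=\{\nabla f(x)\}$ on $\mathrm{int}\,\mathrm{dom}\,f$; and $f$ is strictly convex on $\mathrm{int}\,\mathrm{dom}\,f$. Assumption (A1): $J,H\in\Gamma_0(\mathbb{R}^n)$, $J$ is 1-coercive, and $H$ is a Legendre function. *)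

theory Defs
  imports "HOL-Analysis.Analysis" "HOL-Library.Extended_Real" "HOL-Library.Liminf_Limsup"
begin

text \<open>Extended-real valued functions on a Euclidean space; +\<infinity> encodes the value outside the domain.\<close>

definition edom :: "('a \<Rightarrow> ereal) \<Rightarrow> 'a set" where
  "edom f = {x. f x < \<infinity>}"

definition epigraph :: "('a \<Rightarrow> ereal) \<Rightarrow> ('a \<times> real) set" where
  "epigraph f = {(x, r). f x \<le> ereal r}"

definition proper_fun :: "('a \<Rightarrow> ereal) \<Rightarrow> bool" where
  "proper_fun f \<longleftrightarrow> (\<forall>x. f x \<noteq> -\<infinity>) \<and> (\<exists>x. f x < \<infinity>)"

definition convex_fun :: "('a::real_vector \<Rightarrow> ereal) \<Rightarrow> bool" where
  "convex_fun f \<longleftrightarrow> convex (epigraph f)"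

definition lsc_fun :: "('a::topological_space \<Rightarrow> ereal) \<Rightarrow> bool" where
  "lsc_fun f \<longleftrightarrow> (\<forall>x. f x \<le> Liminf (at x) f)"

definition Gamma0 :: "('a::real_normed_vector \<Rightarrow> ereal) \<Rightarrow> bool" where
  "Gamma0 f \<longleftrightarrow> proper_fun f \<and> convex_fun f \<and> lsc_fun f"

definition conj :: "('a::real_inner \<Rightarrow> ereal) \<Rightarrow> 'a \<Rightarrow> ereal" where
  "conj f p = (SUP x. ereal (inner p x) - f x)"

definition indicator_fun :: "'a set \<Rightarrow> 'a \<Rightarrow> ereal" where
  "indicator_fun C x = (if x \<in> C then 0 else \<infinity>)"

definition subdiff :: "('a::real_inner \<Rightarrow> ereal) \<Rightarrow> 'a \<Rightarrow> 'a set" where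
  "subdiff f x = {p. x \<in> edom f \<and> (\<forall>y. f x + ereal (inner p (y - x)) \<le> f y)}"

definition one_coercive :: "('a::real_normed_vector \<Rightarrow> ereal) \<Rightarrow> bool" where
  "one_coercive g \<longleftrightarrow> ((\<lambda>x. g x / ereal (norm x)) \<longlongrightarrow> \<infinity>) at_infinity"

definition Legendre :: "('a::euclidean_space \<Rightarrow> ereal) \<Rightarrow> bool" where
  "Legendre f \<longleftrightarrow> Gamma0 f
     \<and> interior (edom f) \<noteq> {}
     \<and> (\<forall>x\<in>interior (edom f). (\<lambda>y. real_of_ereal (f y)) differentiable (at x))
     \<and> (\<forall>x\<in>edom f - interior (edom f). subdiff f x = {})
     \<and> (\<forall>x\<in>interior (edom f). \<exists>D. GDERIV (\<lambda>y. real_of_ereal (f y)) x :> D \<and> subdiff f x = {D})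
     \<and> (\<forall>x\<in>interior (edom f). \<forall>y\<in>interior (edom f). \<forall>u::real.
           x \<noteq> y \<and> 0 < u \<and> u < 1 \<longrightarrow>
           f (u *\<^sub>R x + (1 - u) *\<^sub>R y) < ereal u * f x + ereal (1 - u) * f y)"

definition Sfun :: "('a::euclidean_space \<Rightarrow> ereal) \<Rightarrow> ('a \<Rightarrow> ereal) \<Rightarrow> 'a \<times> real \<Rightarrow> ereal" where
  "Sfun J H = (\<lambda>(x, t).
     if t > 0 then (INF v. J (x - t *\<^sub>R v) + ereal t * conj H v)
     else if t = 0 then conj (\<lambda>p. conj J p + indicator_fun (edom H) p) x
     else \<infinity>)"

end

theory Submission
  imports Defs
begin

lemma conv_ineq:
  fixes f :: "'a::real_vector \<Rightarrow> ereal"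
  assumes "convex_fun f" "f x \<le> ereal a" "f y \<le> ereal b" "0 \<le> u" "u \<le> 1"
  shows "f ((1-u) *\<^sub>R x + u *\<^sub>R y) \<le> ereal ((1-u)*a + u*b)"
proof -
  have "(x,a) \<in> epigraph f" "(y,b) \<in> epigraph f" using assms by (auto simp: epigraph_def)
  hence "(1-u) *\<^sub>R (x,a) + u *\<^sub>R (y,b) \<in> epigraph f"
    using assms(1,4,5) unfolding convex_fun_def by (intro convexD) auto
  thus ?thesis by (simp add: epigraph_def)
qed


lemma notin_closure_epi:
  fixes f :: "'a::euclidean_space \<Rightarrow> ereal"
  assumes lsc: "f p \<le> Liminf (at p) f" and r: "ereal r < f p"
  shows "(p, r) \<notin> closure (epigraph f)"
proof
  assume pin: "(p, r) \<in> closure (epigraph f)"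
  obtain r' where r': "ereal r < ereal r'" "ereal r' < f p" using ereal_dense2[OF r] by blast
  have "eventually (\<lambda>y. ereal r' < f y) (at p)" by (rule le_Liminf_iff[THEN iffD1, OF lsc, rule_format, OF r'(2)])
  then obtain d where d: "d>0" "\<forall>y. y \<noteq> p \<and> dist y p < d \<longrightarrow> ereal r' < f y"
    by (auto simp: eventually_at)
  have dd: "\<forall>y. dist y p < d \<longrightarrow> ereal r' < f y" using d r'(2) by auto
  let ?U = "ball p d \<times> {..<r'}"
  have op: "open ?U" by (intro open_Times) auto
  have pU: "(p,r) \<in> ?U" using d r' by auto
  have "?U \<inter> epigraph f = {}"
  proof (rule ccontr)
    assume "?U \<inter> epigraph f \<noteq> {}"
    then obtain y \<rho> where "dist p y < d" "\<rho> < r'" "f y \<le> ereal \<rho>" by (auto simp: epigraph_def)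
    moreover have "ereal r' < f y" using dd \<open>dist p y < d\<close> by (simp add: dist_commute)
    ultimately show False by (meson ereal_less_eq(3) less_le_not_le order.trans)
  qed
  hence "?U \<inter> closure (epigraph f) = {}" by (simp add: open_Int_closure_eq_empty[OF op])
  thus False using pin pU by blast
qed

lemma sep_to_minorant:
  fixes f :: "'a::euclidean_space \<Rightarrow> ereal"
  assumes b0: "\<beta> > 0" and h: "\<And>y \<rho>. f y \<le> ereal \<rho> \<Longrightarrow> a0 \<bullet> y + \<beta> * \<rho> > b"
    and hp: "a0 \<bullet> p + \<beta> * r < b"
  shows "\<exists>a c. (\<forall>y. ereal (a \<bullet> y + c) \<le> f y) \<and> r < a \<bullet> p + c"
proof (intro exI conjI allI)
  let ?a = "- (1/\<beta>) *\<^sub>R a0" and ?c = "b/\<beta>"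
  fix y
  show "ereal (?a \<bullet> y + ?c) \<le> f y"
  proof (cases "f y")
    case (real \<rho>)
    have "a0 \<bullet> y + \<beta> * \<rho> > b" using h[of y \<rho>] real by simp
    hence "(b - a0 \<bullet> y)/\<beta> < \<rho>" using b0 by (simp add: pos_divide_less_eq algebra_simps)
    thus ?thesis using real b0 by (simp add: diff_divide_distrib)
  next
    case PInf then show ?thesis by simp
  next
    case MInf
    define \<rho> where "\<rho> = (b - a0 \<bullet> y)/\<beta> - 1"
    have "a0 \<bullet> y + \<beta> * \<rho> > b" using h[of y \<rho>] MInf by simp
    moreover have "\<beta> * \<rho> = b - a0 \<bullet> y - \<beta>" using b0 by (simp add: \<rho>_def field_simps)
    ultimately show ?thesis using b0 by simp
  qed
next
  show "r < (- (1/\<beta>) *\<^sub>R a0) \<bullet> p + b/\<beta>"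
    using hp b0 by (simp add: pos_less_divide_eq algebra_simps diff_divide_distrib[symmetric])
qed

lemma FM1:
  fixes f :: "'a::euclidean_space \<Rightarrow> ereal"
  assumes cf: "convex_fun f" and lsc: "f p \<le> Liminf (at p) f" and fp: "f p = ereal fp" and r: "r < fp"
  shows "\<exists>a c. (\<forall>y. ereal (a \<bullet> y + c) \<le> f y) \<and> r < a \<bullet> p + c"
proof -
  let ?E = "epigraph f"
  have cvx: "convex (closure ?E)" using cf by (simp add: convex_fun_def convex_closure)
  have nz: "(p,r) \<notin> closure ?E" using notin_closure_epi[OF lsc] r fp by simp
  obtain w b where wb: "w \<bullet> (p,r) < b" "\<forall>z\<in>closure ?E. w \<bullet> z > b"
    using separating_hyperplane_closed_point[OF cvx closed_closure nz] by blast
  obtain a0 \<beta> where w: "w = (a0, \<beta>)" by (cases w)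
  have inE: "(y, \<rho>) \<in> closure ?E" if "f y \<le> ereal \<rho>" for y \<rho>
    using that closure_subset[of "epigraph f"] by (auto simp: epigraph_def)
  have 1: "a0 \<bullet> p + \<beta> * r < b" using wb(1) w by (simp add: inner_Pair inner_real_def)
  have 2: "a0 \<bullet> y + \<beta> * \<rho> > b" if "f y \<le> ereal \<rho>" for y \<rho>
    using wb(2)[rule_format, OF inE[OF that]] w by (simp add: inner_Pair inner_real_def)
  have "a0 \<bullet> p + \<beta> * fp > b" using 2[of p fp] fp by simp
  hence "\<beta> * (fp - r) > 0" using 1 by (simp add: algebra_simps)
  hence "\<beta> > 0" using r by (simp add: zero_less_mult_iff)
  from sep_to_minorant[OF this 2 1] show ?thesis .
qed

lemma FM2:
  fixes f :: "'a::euclidean_space \<Rightarrow> ereal"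
  assumes g: "Gamma0 f" and r: "ereal r < f p"
  shows "\<exists>a c. (\<forall>y. ereal (a \<bullet> y + c) \<le> f y) \<and> r < a \<bullet> p + c"
proof -
  have cf: "convex_fun f" and lsc: "\<And>x. f x \<le> Liminf (at x) f"
    and pr: "\<And>x. f x \<noteq> -\<infinity>" and ex: "\<exists>x. f x < \<infinity>"
    using g by (auto simp: Gamma0_def lsc_fun_def proper_fun_def)
  show ?thesis
  proof (cases "f p")
    case (real fp)
    then show ?thesis using FM1[OF cf lsc real] r by simp
  next
    case MInf then show ?thesis using pr by simp
  next
    case PInf
    obtain p0 where "f p0 < \<infinity>" using ex by blast
    then obtain f0 where f0: "f p0 = ereal f0" using pr[of p0] by (cases "f p0") auto
    obtain a1 c1 where m1: "\<forall>y. ereal (a1 \<bullet> y + c1) \<le> f y"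
      using FM1[OF cf lsc f0, of "f0 - 1"] by auto
    let ?E = "epigraph f"
    have cvx: "convex (closure ?E)" using cf by (simp add: convex_fun_def convex_closure)
    have nz: "(p,r) \<notin> closure ?E" using notin_closure_epi[OF lsc r] .
    obtain w b where wb: "w \<bullet> (p,r) < b" "\<forall>z\<in>closure ?E. w \<bullet> z > b"
      using separating_hyperplane_closed_point[OF cvx closed_closure nz] by blast
    obtain a0 \<beta> where w: "w = (a0, \<beta>)" by (cases w)
    have inE: "(y, \<rho>) \<in> closure ?E" if "f y \<le> ereal \<rho>" for y \<rho>
      using that closure_subset[of "epigraph f"] by (auto simp: epigraph_def)
    have 1: "a0 \<bullet> p + \<beta> * r < b" using wb(1) w by (simp add: inner_Pair inner_real_def)
    have 2: "a0 \<bullet> y + \<beta> * \<rho> > b" if "f y \<le> ereal \<rho>" for y \<rho>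
      using wb(2)[rule_format, OF inE[OF that]] w by (simp add: inner_Pair inner_real_def)
    have \<beta>: "\<beta> \<ge> 0"
    proof (rule ccontr)
      assume "\<not> \<beta> \<ge> 0"
      define \<rho> where "\<rho> = f0 + (\<bar>a0 \<bullet> p0 + \<beta> * f0 - b\<bar> + 1)/(-\<beta>)"
      have "\<rho> \<ge> f0" using \<open>\<not> \<beta> \<ge> 0\<close> by (simp add: \<rho>_def divide_nonneg_neg)
      hence "a0 \<bullet> p0 + \<beta> * \<rho> > b" using 2[of p0 \<rho>] f0 by simp
      moreover have "\<beta> * \<rho> = \<beta> * f0 - (\<bar>a0 \<bullet> p0 + \<beta> * f0 - b\<bar> + 1)"
        using \<open>\<not> \<beta> \<ge> 0\<close> by (simp add: \<rho>_def field_simps)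
      ultimately show False by linarith
    qed
    show ?thesis
    proof (cases "\<beta> > 0")
      case True
      from sep_to_minorant[OF True 2 1] show ?thesis .
    next
      case False
      hence b0: "\<beta> = 0" using \<beta> by simp
      have ap: "a0 \<bullet> p < b" using 1 b0 by simp
      define k where "k = (\<bar>r - a1 \<bullet> p - c1\<bar> + 1)/(b - a0 \<bullet> p)"
      have kpos: "k > 0" using ap by (simp add: k_def)
      have kk: "k * (b - a0 \<bullet> p) = \<bar>r - a1 \<bullet> p - c1\<bar> + 1" using ap by (simp add: k_def)
      show ?thesis
      proof (intro exI conjI allI)
        fix y
        show "ereal ((a1 - k *\<^sub>R a0) \<bullet> y + (c1 + k * b)) \<le> f y"
        proof (cases "f y")
          case (real \<rho>)
          have "a0 \<bullet> y > b" using 2[of y \<rho>] real b0 by simp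
          hence "k * b \<le> k * (a0 \<bullet> y)" using kpos by simp
          hence "(a1 - k *\<^sub>R a0) \<bullet> y + (c1 + k * b) \<le> a1 \<bullet> y + c1"
            by (simp add: inner_diff_left)
          thus ?thesis using m1[rule_format, of y] real by simp
        qed (use pr in auto)
      next
        show "r < (a1 - k *\<^sub>R a0) \<bullet> p + (c1 + k * b)"
          using kk by (simp add: inner_diff_left algebra_simps)
      qed
    qed
  qed
qed

lemma biconj_gt:
  fixes f :: "'a::real_inner \<Rightarrow> ereal"
  assumes m: "\<forall>y. ereal (a \<bullet> y + c) \<le> f y" and r: "r < a \<bullet> p + c"
  shows "ereal r < conj (conj f) p"
proof -
  have "conj f a \<le> ereal (-c)"
    unfolding conj_def
  proof (rule SUP_least)
    fix x
    show "ereal (a \<bullet> x) - f x \<le> ereal (- c)"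
      using m[rule_format, of x] by (cases "f x") auto
  qed
  hence "ereal (p \<bullet> a) - ereal (-c) \<le> ereal (p \<bullet> a) - conj f a"
    by (intro ereal_minus_mono) auto
  also have "\<dots> \<le> conj (conj f) p" unfolding conj_def by (rule SUP_upper) auto
  finally have "ereal (a \<bullet> p + c) \<le> conj (conj f) p" by (simp add: inner_commute)
  thus ?thesis by (rule order_less_le_trans[rotated]) (use r in auto)
qed

lemma biconj_ge:
  fixes f :: "'a::euclidean_space \<Rightarrow> ereal"
  assumes "Gamma0 f"
  shows "f p \<le> conj (conj f) p"
proof (rule ccontr)
  assume "\<not> f p \<le> conj (conj f) p"
  then obtain r where "conj (conj f) p < ereal r" "ereal r < f p"
    using ereal_dense2 by (metis not_le)
  with FM2[OF assms this(2)] biconj_gt show False by (meson not_less_iff_gr_or_eq)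
qed



lemma conj_convex:
  fixes f :: "'a::real_inner \<Rightarrow> ereal"
  assumes A: "conj f v1 \<le> ereal A" and B: "conj f v2 \<le> ereal B" and u: "0 \<le> u" "u \<le> 1"
  shows "conj f ((1-u) *\<^sub>R v1 + u *\<^sub>R v2) \<le> ereal ((1-u)*A + u*B)"
  unfolding conj_def
proof (rule SUP_least)
  fix x
  have 1: "ereal (v1 \<bullet> x) - f x \<le> ereal A" using A unfolding conj_def
    by (meson SUP_upper UNIV_I order_trans)
  have 2: "ereal (v2 \<bullet> x) - f x \<le> ereal B" using B unfolding conj_def
    by (meson SUP_upper UNIV_I order_trans)
  show "ereal (((1-u) *\<^sub>R v1 + u *\<^sub>R v2) \<bullet> x) - f x \<le> ereal ((1-u)*A + u*B)"
  proof (cases "f x")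
    case (real \<phi>)
    have a: "v1 \<bullet> x - \<phi> \<le> A" and b: "v2 \<bullet> x - \<phi> \<le> B" using 1 2 real by auto
    have "(1-u)*(v1 \<bullet> x - \<phi>) \<le> (1-u)*A" using a u by (intro mult_left_mono) auto
    moreover have "u*(v2 \<bullet> x - \<phi>) \<le> u*B" using b u by (intro mult_left_mono) auto
    ultimately show ?thesis using real by (simp add: inner_add_left algebra_simps)
  qed (use 1 in auto)
qed

lemma subgrad_conj:
  fixes f :: "'a::real_inner \<Rightarrow> ereal"
  assumes D: "D \<in> subdiff f q" and h: "f q = ereal h"
  shows "conj f D \<le> ereal (D \<bullet> q - h)"
  unfolding conj_def
proof (rule SUP_least)
  fix y
  have "f q + ereal (D \<bullet> (y - q)) \<le> f y" using D by (auto simp: subdiff_def)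
  thus "ereal (D \<bullet> y) - f y \<le> ereal (D \<bullet> q - h)" using h
    by (cases "f y") (auto simp: inner_diff_right)
qed

lemma conj_ge:
  fixes f :: "'a::real_inner \<Rightarrow> ereal"
  shows "ereal (p \<bullet> x) - f x \<le> conj f p"
  unfolding conj_def by (rule SUP_upper) auto

locale setting =
  fixes J H :: "'a::euclidean_space \<Rightarrow> ereal"
  assumes GJ: "Gamma0 J" and GH: "Gamma0 H" and coerc: "one_coercive J" and LH: "Legendre H"
begin

lemma J_nm: "J x \<noteq> -\<infinity>" using GJ by (auto simp: Gamma0_def proper_fun_def)
lemma H_nm: "H x \<noteq> -\<infinity>" using GH by (auto simp: Gamma0_def proper_fun_def)
lemma J_ex: obtains z0 j0 where "J z0 = ereal j0"
proof -
  obtain z where "J z < \<infinity>" using GJ by (auto simp: Gamma0_def proper_fun_def)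
  thus ?thesis using J_nm[of z] that by (cases "J z") auto
qed
lemma H_ex: obtains q0 h0 where "H q0 = ereal h0"
proof -
  obtain z where "H z < \<infinity>" using GH by (auto simp: Gamma0_def proper_fun_def)
  thus ?thesis using H_nm[of z] that by (cases "H z") auto
qed

lemma conjJ_nm: "conj J p \<noteq> -\<infinity>"
proof -
  obtain z0 j0 where "J z0 = ereal j0" using J_ex .
  hence "ereal (p \<bullet> z0 - j0) \<le> conj J p" using conj_ge[of p z0 J] by simp
  thus ?thesis by auto
qed

lemma conjH_nm: "conj H p \<noteq> -\<infinity>"
proof -
  obtain z0 j0 where "H z0 = ereal j0" using H_ex .
  hence "ereal (p \<bullet> z0 - j0) \<le> conj H p" using conj_ge[of p z0 H] by simp
  thus ?thesis by auto
qed

lemma conjJ_lt: "conj J p < \<infinity>"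
proof -
  obtain z0 j0 where z0: "J z0 = ereal j0" using J_ex .
  have cf: "convex_fun J" and lsc: "\<And>x. J x \<le> Liminf (at x) J"
    using GJ by (auto simp: Gamma0_def lsc_fun_def)
  obtain a c where m: "\<forall>y. ereal (a \<bullet> y + c) \<le> J y"
    using FM1[OF cf lsc z0, of "j0 - 1"] by auto
  have "eventually (\<lambda>x. ereal (norm p + 1) < J x / ereal (norm x)) at_infinity"
    using coerc unfolding one_coercive_def tendsto_PInfty by blast
  then obtain R where R: "\<And>x. R \<le> norm x \<Longrightarrow> ereal (norm p + 1) < J x / ereal (norm x)"
    unfolding eventually_at_infinity by blast
  define R' where "R' = max R 1"
  define K where "K = max 0 ((norm p + norm a) * R' + \<bar>c\<bar>)"
  have "conj J p \<le> ereal K"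
    unfolding conj_def
  proof (rule SUP_least)
    fix x
    show "ereal (p \<bullet> x) - J x \<le> ereal K"
    proof (cases "R' \<le> norm x")
      case True
      hence nx: "norm x > 0" "R \<le> norm x" by (auto simp: R'_def)
      show ?thesis
      proof (cases "J x")
        case (real \<phi>)
        have "ereal (norm p + 1) < ereal (\<phi> / norm x)" using R[OF nx(2)] real nx by simp
        hence "norm p + 1 < \<phi> / norm x" by simp
        hence "(norm p + 1) * norm x < \<phi>" using nx by (simp add: pos_less_divide_eq)
        moreover have "p \<bullet> x \<le> norm p * norm x" by (simp add: norm_cauchy_schwarz)
        ultimately have "p \<bullet> x - \<phi> \<le> 0" by (simp add: algebra_simps) (smt (verit) nx(1))
        thus ?thesis using real by (auto simp: K_def le_max_iff_disj)
      qed (use J_nm in auto)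
    next
      case False
      have ax: "\<bar>a \<bullet> x\<bar> \<le> norm a * R'" using False
        by (smt (verit) Cauchy_Schwarz_ineq2 mult_left_mono norm_ge_zero)
      have px: "\<bar>p \<bullet> x\<bar> \<le> norm p * R'" using False
        by (smt (verit) Cauchy_Schwarz_ineq2 mult_left_mono norm_ge_zero)
      have "ereal (p \<bullet> x) - J x \<le> ereal (p \<bullet> x) - ereal (a \<bullet> x + c)"
        using m by (intro ereal_minus_mono) auto
      also have "\<dots> \<le> ereal K" using ax px by (simp add: K_def algebra_simps)
      finally show ?thesis .
    qed
  qed
  thus ?thesis by auto
qed

definition js :: "'a \<Rightarrow> real" where "js p = real_of_ereal (conj J p)"

lemma conjJ: "conj J p = ereal (js p)"
  using conjJ_nm[of p] conjJ_lt[of p] unfolding js_def by (cases "conj J p") auto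

lemma js_ge: "ereal (p \<bullet> x) - J x \<le> ereal (js p)"
  using conj_ge[of p x J] conjJ by simp

lemma js_convex: "convex_on UNIV js"
proof (rule convex_onI)
  fix x y :: "'a" and t :: real assume "0 < t" "t < 1"
  hence "conj J ((1-t) *\<^sub>R x + t *\<^sub>R y) \<le> ereal ((1-t) * js x + t * js y)"
    by (intro conj_convex) (auto simp: conjJ)
  thus "js ((1-t) *\<^sub>R x + t *\<^sub>R y) \<le> (1-t) * js x + t * js y" by (simp add: conjJ)
qed simp

lemma js_cont: "continuous_on UNIV js"
  by (rule convex_on_continuous[OF open_UNIV js_convex])

end


context setting begin

abbreviation "S \<equiv> Sfun J H"

lemma S_pos: "s > 0 \<Longrightarrow> S (y,s) = (INF v. J (y - s *\<^sub>R v) + ereal s * conj H v)"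
  by (simp add: Sfun_def)
lemma S_zero: "S (y,0) = conj (\<lambda>p. conj J p + indicator_fun (edom H) p) y"
  by (simp add: Sfun_def)
lemma S_neg: "s < 0 \<Longrightarrow> S (y,s) = \<infinity>"
  by (simp add: Sfun_def)

lemma conjH_dom: obtains v0 hv0 where "conj H v0 = ereal hv0"
proof -
  have "interior (edom H) \<noteq> {}" and
    d: "\<forall>x\<in>interior (edom H). \<exists>D. GDERIV (\<lambda>y. real_of_ereal (H y)) x :> D \<and> subdiff H x = {D}"
    using LH by (auto simp: Legendre_def)
  then obtain q1 where q1: "q1 \<in> interior (edom H)" by blast
  then obtain D where D: "subdiff H q1 = {D}" using d by blast
  have "H q1 < \<infinity>" using q1 interior_subset[of "edom H"] by (auto simp: edom_def)
  then obtain h1 where h1: "H q1 = ereal h1" using H_nm[of q1] by (cases "H q1") auto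
  have "conj H D \<le> ereal (D \<bullet> q1 - h1)" using subgrad_conj[of D H q1 h1] D h1 by simp
  thus ?thesis using conjH_nm[of D] that by (cases "conj H D") auto
qed

lemma weak:
  assumes hq: "H q = ereal hq" and s: "s \<ge> 0"
  shows "ereal (q \<bullet> y - s*hq - js q) \<le> S (y,s)"
proof (cases "s = 0")
  case True
  have "ereal (q \<bullet> y) - (conj J q + indicator_fun (edom H) q)
        \<le> conj (\<lambda>p. conj J p + indicator_fun (edom H) p) y"
    using conj_ge[of y q] by (simp add: inner_commute)
  thus ?thesis using True hq by (simp add: S_zero conjJ indicator_fun_def edom_def)
next
  case False
  hence sp: "s > 0" using s by simp
  show ?thesis unfolding S_pos[OF sp]
  proof (rule INF_greatest)
    fix v
    let ?z = "y - s *\<^sub>R v"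
    have 1: "ereal (q \<bullet> ?z - js q) \<le> J ?z" using js_ge[of q ?z]
      by (cases "J ?z") auto
    have 2: "ereal (v \<bullet> q - hq) \<le> conj H v" using conj_ge[of v q H] hq by simp
    have 3: "ereal s * ereal (v \<bullet> q - hq) \<le> ereal s * conj H v"
      using 2 sp by (intro ereal_mult_left_mono) auto
    have "ereal (q \<bullet> ?z - js q) + ereal s * ereal (v \<bullet> q - hq) \<le> J ?z + ereal s * conj H v"
      using 1 3 by (rule add_mono)
    moreover have "q \<bullet> ?z - js q + s * (v \<bullet> q - hq) = q \<bullet> y - s*hq - js q"
      by (simp add: inner_diff_right algebra_simps inner_commute)
    ultimately show "ereal (q \<bullet> y - s*hq - js q) \<le> J ?z + ereal s * conj H v" by simp
  qed
qed

lemma S_nm: "S w \<noteq> -\<infinity>"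
proof -
  obtain y s where w: "w = (y,s)" by (cases w)
  show ?thesis
  proof (cases "s < 0")
    case True thus ?thesis using w S_neg by simp
  next
    case False
    obtain q0 h0 where "H q0 = ereal h0" using H_ex .
    from weak[OF this, of s y] False w show ?thesis by auto
  qed
qed

lemma S_ub: "s > 0 \<Longrightarrow> S (z + s *\<^sub>R v, s) \<le> J z + ereal s * conj H v"
  unfolding S_pos by (rule INF_lower2[of v]) auto

definition Phi :: "'a \<Rightarrow> real \<Rightarrow> 'a \<Rightarrow> ereal" where
  "Phi x t q = ereal (q \<bullet> x) - ereal t * H q - conj J q"

lemma Phi_real: "H q = ereal hq \<Longrightarrow> Phi x t q = ereal (q \<bullet> x - t*hq - js q)"
  by (simp add: Phi_def conjJ)

lemma Phi_le: assumes "t > 0" shows "Phi x t q \<le> S (x,t)"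
proof (cases "H q")
  case (real hq)
  thus ?thesis using weak[OF real, of t x] assms by (simp add: Phi_real inner_commute)
qed (use assms H_nm in \<open>auto simp: Phi_def conjJ\<close>)

lemma L_back:
  assumes hq: "H q \<le> ereal (-E)" and Sx: "S (x,t) = ereal Sx" and t: "t \<ge> 0"
    and ineq: "Sx + js q \<le> q \<bullet> x + E*t"
  shows "(q,E) \<in> subdiff S (x,t)"
  unfolding subdiff_def
proof (intro CollectI conjI allI)
  show "(x,t) \<in> edom S" using Sx by (simp add: edom_def)
  obtain h where h: "H q = ereal h" using hq H_nm[of q] by (cases "H q") auto
  have hE: "h \<le> -E" using hq h by simp
  fix w :: "'a \<times> real"
  obtain y s where w: "w = (y,s)" by (cases w)
  show "S (x,t) + ereal ((q,E) \<bullet> (w - (x,t))) \<le> S w"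
  proof (cases "s < 0")
    case True thus ?thesis using w S_neg by simp
  next
    case False
    have "s * h \<le> s * (-E)" using hE False by (intro mult_left_mono) auto
    hence "Sx + (q \<bullet> (y - x) + E * (s - t)) \<le> q \<bullet> y - s*h - js q"
      using ineq by (simp add: inner_diff_right algebra_simps)
    hence "ereal (Sx + (q \<bullet> (y - x) + E * (s - t))) \<le> S (y,s)"
      using weak[OF h, of s y] False by (meson ereal_less_eq(3) not_le order_trans)
    thus ?thesis using w Sx by (simp add: inner_Pair inner_real_def)
  qed
qed

lemma L_fwd:
  assumes Sx: "S (x,t) = ereal Sx"
    and sg: "\<And>y s. s > 0 \<Longrightarrow> S (x,t) + ereal (q \<bullet> (y - x) + E*(s - t)) \<le> S (y,s)"
  shows "H q \<le> ereal (-E)" "js q \<le> q \<bullet> x + E*t - Sx"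
proof -
  define C where "C = q \<bullet> x + E*t - Sx"
  have key: "q \<bullet> z - jz + s*(q \<bullet> v + E - hv) \<le> C"
    if jz: "J z = ereal jz" and hv: "conj H v = ereal hv" and s: "s > 0" for z v s jz hv
  proof -
    have "S (x,t) + ereal (q \<bullet> (z + s *\<^sub>R v - x) + E*(s - t)) \<le> S (z + s *\<^sub>R v, s)"
      using sg[OF s] .
    also have "\<dots> \<le> J z + ereal s * conj H v" using S_ub[OF s] .
    finally have "Sx + (q \<bullet> (z + s *\<^sub>R v - x) + E*(s - t)) \<le> jz + s * hv"
      using Sx jz hv by simp
    thus ?thesis by (simp add: C_def inner_diff_right inner_add_right algebra_simps)
  qed
  obtain v0 hv0 where v0: "conj H v0 = ereal hv0" using conjH_dom .
  obtain z0 j0 where z0: "J z0 = ereal j0" using J_ex .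
  have "conj J q \<le> ereal C" unfolding conj_def
  proof (rule SUP_least)
    fix z
    show "ereal (q \<bullet> z) - J z \<le> ereal C"
    proof (cases "J z")
      case (real jz)
      define \<alpha> where "\<alpha> = q \<bullet> v0 + E - hv0"
      have "q \<bullet> z - jz \<le> C + e" if e: "e > 0" for e
      proof -
        define s where "s = e / (\<bar>\<alpha>\<bar> + 1)"
        have sp: "s > 0" using e by (simp add: s_def)
        have "q \<bullet> z - jz + s*\<alpha> \<le> C" using key[OF real v0 sp] by (simp add: \<alpha>_def)
        moreover have "s * \<bar>\<alpha>\<bar> \<le> e"
          using e by (simp add: s_def field_simps)
        moreover have "- (s*\<alpha>) \<le> s * \<bar>\<alpha>\<bar>" using sp
          by (metis abs_ge_minus_self abs_mult abs_of_pos)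
        ultimately show ?thesis by linarith
      qed
      hence "q \<bullet> z - jz \<le> C" by (rule field_le_epsilon)
      thus ?thesis using real by simp
    qed (use J_nm in auto)
  qed
  thus "js q \<le> q \<bullet> x + E*t - Sx" by (simp add: conjJ C_def)
  have "conj (conj H) q \<le> ereal (-E)" unfolding conj_def[of "conj H" q]
  proof (rule SUP_least)
    fix v
    show "ereal (q \<bullet> v) - conj H v \<le> ereal (-E)"
    proof (cases "conj H v")
      case (real hv)
      have "q \<bullet> v + E - hv \<le> 0"
      proof (rule ccontr)
        assume "\<not> ?thesis"
        hence ap: "q \<bullet> v + E - hv > 0" by simp
        define s where "s = (\<bar>C - (q \<bullet> z0 - j0)\<bar> + 1)/(q \<bullet> v + E - hv)"
        have sp: "s > 0" using ap by (simp add: s_def)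
        have "s * (q \<bullet> v + E - hv) = \<bar>C - (q \<bullet> z0 - j0)\<bar> + 1" using ap by (simp add: s_def)
        thus False using key[OF z0 real sp] by linarith
      qed
      thus ?thesis using real by simp
    next
      case PInf thus ?thesis by simp
    next
      case MInf thus ?thesis using conjH_nm[of v] by simp
    qed
  qed
  with biconj_ge[OF GH, of q] show "H q \<le> ereal (-E)" by simp
qed

end


context setting begin

lemma J_conv: "J ((1-u) *\<^sub>R x + u *\<^sub>R y) \<le> ereal ((1-u)*a + u*b)"
  if "J x \<le> ereal a" "J y \<le> ereal b" "0 \<le> u" "u \<le> 1" for x y a b u
  using conv_ineq[of J x a y b u] that GJ by (simp add: Gamma0_def)

lemma H_conv: "H ((1-u) *\<^sub>R x + u *\<^sub>R y) \<le> ereal ((1-u)*a + u*b)"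
  if "H x \<le> ereal a" "H y \<le> ereal b" "0 \<le> u" "u \<le> 1" for x y a b u
  using conv_ineq[of H x a y b u] that GH by (simp add: Gamma0_def)

lemma approx_S:
  assumes s: "s > 0" and le: "S (y,s) < ereal r"
  obtains v a h where "J (y - s *\<^sub>R v) = ereal a" "conj H v = ereal h" "a + s*h < r"
proof -
  obtain v where v: "J (y - s *\<^sub>R v) + ereal s * conj H v < ereal r"
    using le unfolding S_pos[OF s] INF_less_iff by blast
  have j: "J (y - s *\<^sub>R v) \<noteq> \<infinity>"
    using v conjH_nm[of v] s by (cases "J (y - s *\<^sub>R v)"; cases "conj H v") auto
  have h: "conj H v \<noteq> \<infinity>"
    using v J_nm[of "y - s *\<^sub>R v"] s by (cases "J (y - s *\<^sub>R v)"; cases "conj H v") auto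
  obtain a where a: "J (y - s *\<^sub>R v) = ereal a" using j J_nm by (cases "J (y - s *\<^sub>R v)") auto
  obtain hh where hh: "conj H v = ereal hh" using h conjH_nm by (cases "conj H v") auto
  show ?thesis using that[OF a hh] v a hh by simp
qed

lemma JC:
  assumes s1: "s1 > 0" and s2: "s2 > 0" and r1: "S (y1,s1) \<le> ereal r1" and r2: "S (y2,s2) \<le> ereal r2"
    and u: "0 \<le> u" "u \<le> 1"
  shows "S ((1-u) *\<^sub>R (y1,s1) + u *\<^sub>R (y2,s2)) \<le> ereal ((1-u)*r1 + u*r2)"
proof -
  define y where "y = (1-u) *\<^sub>R y1 + u *\<^sub>R y2"
  define s where "s = (1-u) * s1 + u * s2"
  have sp: "s > 0"
  proof (cases "u = 1")
    case True thus ?thesis using s2 by (simp add: s_def)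
  next
    case False
    hence "(1-u)* s1 > 0" using u s1 by simp
    moreover have "u * s2 \<ge> 0" using u s2 by simp
    ultimately show ?thesis by (simp add: s_def)
  qed
  have pt: "(1-u) *\<^sub>R (y1,s1) + u *\<^sub>R (y2,s2) = (y,s)" by (simp add: y_def s_def)
  have "S (y,s) \<le> ereal ((1-u)*r1 + u*r2) + ereal e" if e: "e > 0" for e
  proof -
    have "S (y1,s1) < ereal (r1 + e)" by (rule order_le_less_trans[OF r1]) (use e in simp)
    then obtain v1 a1 h1 where A1: "J (y1 - s1 *\<^sub>R v1) = ereal a1" "conj H v1 = ereal h1" "a1 + s1*h1 < r1 + e"
      using approx_S[OF s1] by metis
    have "S (y2,s2) < ereal (r2 + e)" by (rule order_le_less_trans[OF r2]) (use e in simp)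
    then obtain v2 a2 h2 where A2: "J (y2 - s2 *\<^sub>R v2) = ereal a2" "conj H v2 = ereal h2" "a2 + s2*h2 < r2 + e"
      using approx_S[OF s2] by metis
    define \<mu> where "\<mu> = u* s2/s"
    have us: "u* s2 \<le> s" using u s1 by (simp add: s_def)
    have \<mu>: "0 \<le> \<mu>" "\<mu> \<le> 1" using u s2 sp us by (auto simp: \<mu>_def)
    have sm1: "s * (1-\<mu>) = (1-u)* s1" using sp by (simp add: \<mu>_def s_def field_simps)
    have sm2: "s * \<mu> = u* s2" using sp by (simp add: \<mu>_def)
    define v where "v = (1-\<mu>) *\<^sub>R v1 + \<mu> *\<^sub>R v2"
    have sv: "s *\<^sub>R v = ((1-u)* s1) *\<^sub>R v1 + (u* s2) *\<^sub>R v2"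
      by (simp add: v_def scaleR_add_right sm1 sm2 flip: sm1 sm2)
    have yv: "y - s *\<^sub>R v = (1-u) *\<^sub>R (y1 - s1 *\<^sub>R v1) + u *\<^sub>R (y2 - s2 *\<^sub>R v2)"
      by (simp add: sv y_def scaleR_diff_right algebra_simps)
    have hJ: "J (y - s *\<^sub>R v) \<le> ereal ((1-u)*a1 + u*a2)"
      unfolding yv by (rule J_conv) (use A1 A2 u in auto)
    have hH: "conj H v \<le> ereal ((1-\<mu>)*h1 + \<mu>*h2)"
      unfolding v_def by (rule conj_convex) (use A1 A2 \<mu> in auto)
    have "S (y,s) \<le> J (y - s *\<^sub>R v) + ereal s * conj H v"
      unfolding S_pos[OF sp] by (rule INF_lower) simp
    also have "\<dots> \<le> ereal ((1-u)*a1 + u*a2) + ereal s * ereal ((1-\<mu>)*h1 + \<mu>*h2)"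
      using hJ hH sp by (intro add_mono ereal_mult_left_mono) auto
    also have "\<dots> = ereal ((1-u)*(a1 + s1*h1) + u*(a2 + s2*h2))"
    proof -
      have "s * ((1-\<mu>)*h1 + \<mu>*h2) = (s*(1-\<mu>))*h1 + (s*\<mu>)*h2" by (simp add: algebra_simps)
      also have "\<dots> = (1-u) * s1 * h1 + u * s2 * h2" by (simp only: sm1 sm2)
      finally have e1: "s * ((1-\<mu>)*h1 + \<mu>*h2) = (1-u) * s1 * h1 + u * s2 * h2" .
      have "ereal ((1-u)*a1 + u*a2) + ereal s * ereal ((1-\<mu>)*h1 + \<mu>*h2)
          = ereal ((1-u)*a1 + u*a2 + s * ((1-\<mu>)*h1 + \<mu>*h2))" by simp
      also have "\<dots> = ereal ((1-u)*(a1 + s1*h1) + u*(a2 + s2*h2))" unfolding e1 by (simp add: algebra_simps)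
      finally show ?thesis .
    qed
    also have "\<dots> \<le> ereal ((1-u)*(r1+e) + u*(r2+e))"
    proof -
      have "(1-u)*(a1 + s1*h1) \<le> (1-u)*(r1+e)" using A1(3) u by (intro mult_left_mono) auto
      moreover have "u*(a2 + s2*h2) \<le> u*(r2+e)" using A2(3) u by (intro mult_left_mono) auto
      ultimately show ?thesis by simp
    qed
    also have "\<dots> = ereal ((1-u)*r1 + u*r2) + ereal e" by (simp add: algebra_simps)
    finally show ?thesis .
  qed
  hence "S (y,s) \<le> ereal ((1-u)*r1 + u*r2)" by (rule ereal_le_epsilon2)
  thus ?thesis using pt by simp
qed

end


context setting begin

lemma S_fin: assumes "w \<in> edom S" obtains r where "S w = ereal r"
  using assms S_nm[of w] by (cases "S w") (auto simp: edom_def)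

lemma int_t_pos: assumes "(x,t) \<in> interior (edom S)" shows "t > 0"
proof -
  obtain e where e: "e > 0" "ball (x,t) e \<subseteq> edom S" using assms mem_interior by blast
  have "(x, t - e/2) \<in> ball (x,t) e" using e by (simp add: dist_Pair_Pair dist_real_def)
  hence "S (x, t - e/2) < \<infinity>" using e by (auto simp: edom_def)
  hence "\<not> t - e/2 < 0" using S_neg by force
  thus ?thesis using e by simp
qed

lemma int_subgrad:
  assumes int: "(x,t) \<in> interior (edom S)"
  obtains c E where "\<And>y s. s > 0 \<Longrightarrow> S (x,t) + ereal (c \<bullet> (y - x) + E * (s - t)) \<le> S (y,s)"
proof -
  define z0 where "z0 = (x,t)"
  have tp: "t > 0" using int_t_pos[OF int] .
  obtain e where e: "e > 0" "ball z0 e \<subseteq> edom S" using int mem_interior z0_def by blast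
  define \<rho> where "\<rho> = min e t"
  have \<rho>: "\<rho> > 0" using e tp by (simp add: \<rho>_def)
  define B where "B = ball z0 \<rho>"
  have Bdom: "z \<in> edom S" if "z \<in> B" for z using that e by (auto simp: B_def \<rho>_def)
  have Bpos: "snd z > 0" if "z \<in> B" for z
  proof -
    have "dist (snd z0) (snd z) \<le> dist z0 z" by (rule dist_snd_le)
    also have "\<dots> < t" using that by (simp add: B_def \<rho>_def)
    finally show ?thesis by (simp add: z0_def dist_real_def)
  qed
  have z0B: "z0 \<in> B" using \<rho> by (simp add: B_def)
  obtain Sx where Sx: "S z0 = ereal Sx" using S_fin[OF Bdom[OF z0B]] .
  have JCz: "S ((1-u) *\<^sub>R z1 + u *\<^sub>R z2) \<le> ereal ((1-u) * r1 + u * r2)"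
    if "snd z1 > 0" "snd z2 > 0" "S z1 \<le> ereal r1" "S z2 \<le> ereal r2" "0 \<le> u" "u \<le> 1"
    for z1 z2 r1 r2 u
    using JC[of "snd z1" "snd z2" "fst z1" r1 "fst z2" r2 u] that by simp
  define A where "A = {(z, r). z \<in> B \<and> S z \<le> ereal r}"
  define T where "T = {(z0, r) | r. r < Sx}"
  have cA: "convex A" unfolding convex_def
  proof (intro ballI allI impI)
    fix p1 p2 :: "('a \<times> real) \<times> real" and u v :: real
    assume p: "p1 \<in> A" "p2 \<in> A" and uv: "0 \<le> u" "0 \<le> v" "u + v = 1"
    obtain z1 r1 z2 r2 where pp: "p1 = (z1,r1)" "p2 = (z2,r2)" by (cases p1, cases p2)
    have z: "z1 \<in> B" "z2 \<in> B" "S z1 \<le> ereal r1" "S z2 \<le> ereal r2" using p pp by (auto simp: A_def)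
    have u: "u = 1 - v" using uv by simp
    have "u *\<^sub>R z1 + v *\<^sub>R z2 \<in> B" using z uv convex_ball unfolding B_def convex_def by blast
    moreover have "S (u *\<^sub>R z1 + v *\<^sub>R z2) \<le> ereal (u * r1 + v * r2)"
      using JCz[of z1 z2 r1 r2 v] z uv Bpos unfolding u by simp
    ultimately show "u *\<^sub>R p1 + v *\<^sub>R p2 \<in> A" using pp by (simp add: A_def)
  qed
  have cT: "convex T" unfolding convex_def
  proof (intro ballI allI impI)
    fix p1 p2 :: "('a \<times> real) \<times> real" and u v :: real
    assume p: "p1 \<in> T" "p2 \<in> T" and uv: "0 \<le> u" "0 \<le> v" "u + v = 1"
    then obtain r1 r2 where pp: "p1 = (z0,r1)" "p2 = (z0,r2)" "r1 < Sx" "r2 < Sx" by (auto simp: T_def)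
    have "u * r1 + v * r2 < Sx"
    proof -
      have "u * r1 \<le> u * Sx" "v * r2 \<le> v * Sx" using pp uv by (auto intro: mult_left_mono)
      moreover have "u * r1 < u * Sx \<or> v * r2 < v * Sx"
      proof (cases "u = 0")
        case True thus ?thesis using pp uv by simp
      next
        case False thus ?thesis using pp uv by (simp add: mult_strict_left_mono)
      qed
      moreover have "u * Sx + v * Sx = Sx" using uv(3) by (metis distrib_right mult_1)
      ultimately show ?thesis by linarith
    qed
    moreover have "u *\<^sub>R z0 + v *\<^sub>R z0 = z0" using uv by (simp flip: scaleR_add_left)
    ultimately show "u *\<^sub>R p1 + v *\<^sub>R p2 \<in> T" using pp by (auto simp: T_def)
  qed
  have "(z0, Sx) \<in> A" using z0B Sx by (simp add: A_def)
  hence nA: "A \<noteq> {}" by blast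
  have nT: "T \<noteq> {}" by (auto simp: T_def intro!: exI[of _ "Sx - 1"])
  have dAT: "A \<inter> T = {}" using Sx by (auto simp: A_def T_def)
  obtain w b where wb: "w \<noteq> 0" "\<forall>p\<in>A. w \<bullet> p \<le> b" "\<forall>p\<in>T. w \<bullet> p \<ge> b"
    using separating_hyperplane_sets[OF cA cT nA nT dAT] by blast
  obtain g \<beta> where w: "w = (g, \<beta>)" by (cases w)
  have hA: "g \<bullet> z + \<beta> * r \<le> b" if "z \<in> B" "S z \<le> ereal r" for z r
  proof -
    have "(z, r) \<in> A" using that by (simp add: A_def)
    thus ?thesis using wb(2) w by (auto simp: inner_Pair inner_real_def)
  qed
  have hT: "g \<bullet> z0 + \<beta> * r \<ge> b" if "r < Sx" for r
  proof -
    have "(z0, r) \<in> T" using that by (simp add: T_def)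
    thus ?thesis using wb(3) w by (auto simp: inner_Pair inner_real_def)
  qed
  have b0: "\<beta> < 0"
  proof (rule ccontr)
    assume "\<not> \<beta> < 0"
    hence bn: "\<beta> \<ge> 0" by simp
    show False
    proof (cases "\<beta> = 0")
      case True
      hence g0: "g \<noteq> 0" using wb(1) w by (auto simp: zero_prod_def)
      define \<delta> where "\<delta> = \<rho> / (2 * (norm g + 1))"
      have "2 * (norm g + 1) > 0" by (smt (verit) norm_ge_zero)
      hence \<delta>: "\<delta> > 0" unfolding \<delta>_def using \<rho> by simp
      have "norm (\<delta> *\<^sub>R g) < \<rho>"
      proof -
        have "norm (\<delta> *\<^sub>R g) = \<delta> * norm g" using \<delta> by simp
        also have "\<dots> < \<delta> * (2 * (norm g + 1))" using \<delta> by (intro mult_strict_left_mono) (auto, smt (verit) norm_ge_zero)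
        also have "\<dots> = \<rho>" using \<open>2 * (norm g + 1) > 0\<close> by (simp add: \<delta>_def)
        finally show ?thesis .
      qed
      hence zB: "z0 + \<delta> *\<^sub>R g \<in> B" by (simp add: B_def dist_norm)
      obtain r where "S (z0 + \<delta> *\<^sub>R g) = ereal r" using S_fin[OF Bdom[OF zB]] .
      hence "g \<bullet> (z0 + \<delta> *\<^sub>R g) \<le> b" using hA[OF zB, of r] True by simp
      moreover have "g \<bullet> z0 \<ge> b" using hT[of "Sx - 1"] True by simp
      moreover have "g \<bullet> g > 0" using g0 by simp
      moreover have "\<delta> * (g \<bullet> g) > 0" using \<delta> \<open>g \<bullet> g > 0\<close> by simp
      ultimately show False by (simp add: inner_add_right)
    next
      case False
      hence bp: "\<beta> > 0" using bn by simp
      define r where "r = (\<bar>b - g \<bullet> z0\<bar> + 1)/\<beta> + \<bar>Sx\<bar>"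
      have "(\<bar>b - g \<bullet> z0\<bar> + 1)/\<beta> > 0" using bp by (intro divide_pos_pos) auto
      hence "Sx \<le> r" unfolding r_def by linarith
      hence "S z0 \<le> ereal r" using Sx by simp
      hence "g \<bullet> z0 + \<beta> * r \<le> b" using hA[OF z0B] by simp
      moreover have "\<beta> * r = \<bar>b - g \<bullet> z0\<bar> + 1 + \<beta> * \<bar>Sx\<bar>" using bp by (simp add: r_def field_simps)
      moreover have "\<beta> * \<bar>Sx\<bar> \<ge> 0" using bp by simp
      ultimately show False by linarith
    qed
  qed
  define \<gamma> where "\<gamma> = -\<beta>"
  have \<gamma>: "\<gamma> > 0" using b0 by (simp add: \<gamma>_def)
  define c' where "c' = (1/\<gamma>) *\<^sub>R g"
  have SxK: "Sx \<le> (g \<bullet> z0 - b)/\<gamma>"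
  proof (rule ccontr)
    assume nt: "\<not> ?thesis"
    define K where "K = (g \<bullet> z0 - b)/\<gamma>"
    define r where "r = (Sx + K)/2"
    have r1: "r < Sx" and r2: "r > K" using nt[folded K_def] by (simp_all add: r_def)
    have h1: "g \<bullet> z0 - \<gamma> * r \<ge> b" using hT[OF r1] by (simp add: \<gamma>_def)
    have h2: "\<gamma> * r > g \<bullet> z0 - b" using r2 \<gamma> by (simp add: K_def pos_divide_less_eq mult.commute)
    show False using h1 h2 by linarith
  qed
  have loc: "ereal (Sx + c' \<bullet> (z - z0)) \<le> S z" if zB: "z \<in> B" for z
  proof -
    obtain r where r: "S z = ereal r" using S_fin[OF Bdom[OF zB]] .
    have "g \<bullet> z - \<gamma> * r \<le> b" using hA[OF zB, of r] r by (simp add: \<gamma>_def)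
    hence "(g \<bullet> z - b)/\<gamma> \<le> r" using \<gamma> by (simp add: pos_divide_le_eq mult.commute)
    moreover have "c' \<bullet> (z - z0) = (g \<bullet> z - b)/\<gamma> - (g \<bullet> z0 - b)/\<gamma>"
      by (simp add: c'_def inner_diff_right diff_divide_distrib)
    ultimately show ?thesis using SxK r by simp
  qed
  have glob: "ereal (Sx + c' \<bullet> (z - z0)) \<le> S z" if zp: "snd z > 0" for z
  proof (cases "S z")
    case PInf thus ?thesis by simp
  next
    case MInf thus ?thesis using S_nm by simp
  next
    case (real Sz)
    define \<delta> where "\<delta> = min (1/2) (\<rho> / (2 * (norm (z - z0) + 1)))"
    have "2 * (norm (z - z0) + 1) > 0" by (smt (verit) norm_ge_zero)
    hence "\<rho> / (2 * (norm (z - z0) + 1)) > 0" using \<rho> by simp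
    hence \<delta>: "\<delta> > 0" "\<delta> \<le> 1" by (auto simp: \<delta>_def)
    define wz where "wz = (1-\<delta>) *\<^sub>R z0 + \<delta> *\<^sub>R z"
    have wz: "wz = z0 + \<delta> *\<^sub>R (z - z0)" by (simp add: wz_def algebra_simps)
    have "norm (\<delta> *\<^sub>R (z - z0)) < \<rho>"
    proof -
      have "norm (\<delta> *\<^sub>R (z - z0)) = \<delta> * norm (z - z0)" using \<delta> by simp
      also have "\<dots> \<le> (\<rho> / (2 * (norm (z - z0) + 1))) * norm (z - z0)"
        by (intro mult_right_mono) (auto simp: \<delta>_def)
      also have "\<dots> < \<rho>" using \<rho> by (simp add: field_simps add_pos_nonneg)
      finally show ?thesis .
    qed
    hence wB: "wz \<in> B" by (simp add: B_def wz dist_norm)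
    have "S wz \<le> ereal ((1-\<delta>) * Sx + \<delta> * Sz)"
      unfolding wz_def by (rule JCz) (use Bpos[OF z0B] zp Sx real \<delta> in auto)
    moreover have "ereal (Sx + c' \<bullet> (wz - z0)) \<le> S wz" using loc[OF wB] .
    ultimately have "Sx + \<delta> * (c' \<bullet> (z - z0)) \<le> (1-\<delta>) * Sx + \<delta> * Sz"
      by (simp add: wz) (metis ereal_less_eq(3) order_trans)
    hence "\<delta> * (Sx + c' \<bullet> (z - z0)) \<le> \<delta> * Sz" by (simp add: algebra_simps)
    hence "Sx + c' \<bullet> (z - z0) \<le> Sz" using \<delta> by simp
    thus ?thesis using real by simp
  qed
  show ?thesis
  proof (rule that[of "fst c'" "snd c'"])
    fix s :: real and y :: 'a assume "s > 0"
    hence "ereal (Sx + c' \<bullet> ((y,s) - z0)) \<le> S (y,s)" using glob[of "(y,s)"] by simp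
    moreover have "c' \<bullet> ((y,s) - z0) = fst c' \<bullet> (y - x) + snd c' * (s - t)"
      by (cases c') (simp add: z0_def inner_Pair inner_real_def)
    ultimately show "S (x,t) + ereal (fst c' \<bullet> (y - x) + snd c' * (s - t)) \<le> S (y,s)"
      using Sx by (simp add: z0_def)
  qed
qed

end


lemma conv_strict:
  fixes r1 r2 a1 a2 u v :: real
  assumes "r1 < a1" "r2 < a2" "0 \<le> u" "0 \<le> v" "u + v = 1"
  shows "u * r1 + v * r2 < u * a1 + v * a2"
proof (cases "u = 0")
  case True thus ?thesis using assms by simp
next
  case False
  hence "u * r1 < u * a1" using assms by (simp add: mult_strict_left_mono)
  moreover have "v * r2 \<le> v * a2" using assms by (simp add: mult_left_mono)
  ultimately show ?thesis by linarith
qed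

context setting begin

lemma sumrule:
  assumes t: "t > 0" and hq: "H q = ereal hq" and mx: "\<And>p. Phi x t p \<le> Phi x t q"
  obtains c where "(1/t) *\<^sub>R (x + c) \<in> subdiff H q" and "\<And>y. js q - c \<bullet> (y - q) \<le> js y"
proof -
  define F where "F y hy = t * (hy - hq) - x \<bullet> (y - q)" for y hy
  define A where "A = {(y, r). \<exists>hy. H y = ereal hy \<and> F y hy \<le> r}"
  define T where "T = {(y, r). r < js q - js y}"
  have Flin: "F (u *\<^sub>R y1 + v *\<^sub>R y2) (u * h1 + v * h2) = u * F y1 h1 + v * F y2 h2"
    if "u + v = 1" for u v y1 y2 h1 h2
  proof -
    have v: "v = 1 - u" using that by simp
    show ?thesis unfolding v by (simp add: F_def inner_diff_right inner_add_right algebra_simps)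
  qed
  have Fmono: "F y h1 \<le> F y h2" if "h1 \<le> h2" for y h1 h2
    using that t by (simp add: F_def)
  have cA: "convex A" unfolding convex_def
  proof (intro ballI allI impI)
    fix p1 p2 :: "'a \<times> real" and u v :: real
    assume p: "p1 \<in> A" "p2 \<in> A" and uv: "0 \<le> u" "0 \<le> v" "u + v = 1"
    obtain y1 r1 y2 r2 where pp: "p1 = (y1,r1)" "p2 = (y2,r2)" by (cases p1, cases p2)
    obtain h1 h2 where h: "H y1 = ereal h1" "F y1 h1 \<le> r1" "H y2 = ereal h2" "F y2 h2 \<le> r2"
      using p pp by (auto simp: A_def)
    have u: "u = 1 - v" using uv by simp
    have "H (u *\<^sub>R y1 + v *\<^sub>R y2) \<le> ereal (u * h1 + v * h2)"
      using H_conv[of y1 h1 y2 h2 v] h uv unfolding u by simp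
    then obtain hm where hm: "H (u *\<^sub>R y1 + v *\<^sub>R y2) = ereal hm" "hm \<le> u * h1 + v * h2"
      using H_nm by (cases "H (u *\<^sub>R y1 + v *\<^sub>R y2)") auto
    have "F (u *\<^sub>R y1 + v *\<^sub>R y2) hm \<le> F (u *\<^sub>R y1 + v *\<^sub>R y2) (u * h1 + v * h2)"
      using hm Fmono by blast
    also have "\<dots> = u * F y1 h1 + v * F y2 h2" using Flin uv by blast
    also have "\<dots> \<le> u * r1 + v * r2" using h uv by (intro add_mono mult_left_mono) auto
    finally show "u *\<^sub>R p1 + v *\<^sub>R p2 \<in> A" using pp hm by (auto simp: A_def)
  qed
  have cT: "convex T" unfolding convex_def
  proof (intro ballI allI impI)
    fix p1 p2 :: "'a \<times> real" and u v :: real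
    assume p: "p1 \<in> T" "p2 \<in> T" and uv: "0 \<le> u" "0 \<le> v" "u + v = 1"
    obtain y1 r1 y2 r2 where pp: "p1 = (y1,r1)" "p2 = (y2,r2)" by (cases p1, cases p2)
    have r: "r1 < js q - js y1" "r2 < js q - js y2" using p pp by (auto simp: T_def)
    have u: "u = 1 - v" using uv by simp
    have "js (u *\<^sub>R y1 + v *\<^sub>R y2) \<le> u * js y1 + v * js y2"
      using convex_onD[OF js_convex, of v y1 y2] uv unfolding u by simp
    moreover have "u * r1 + v * r2 < u * (js q - js y1) + v * (js q - js y2)"
      using conv_strict[OF r uv] .
    moreover have "u * (js q - js y1) + v * (js q - js y2) = js q - (u * js y1 + v * js y2)"
      unfolding u by (simp add: algebra_simps)
    ultimately show "u *\<^sub>R p1 + v *\<^sub>R p2 \<in> T" using pp by (simp add: T_def)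
  qed
  have qA: "(q, 0) \<in> A" using hq by (simp add: A_def F_def)
  hence nA: "A \<noteq> {}" by blast
  have "(q, -1) \<in> T" by (simp add: T_def)
  hence nT: "T \<noteq> {}" by blast
  have dAT: "A \<inter> T = {}"
  proof (rule ccontr)
    assume "A \<inter> T \<noteq> {}"
    then obtain y r hy where y: "H y = ereal hy" "F y hy \<le> r" "r < js q - js y"
      by (auto simp: A_def T_def)
    have "Phi x t y \<le> Phi x t q" by (rule mx)
    hence "y \<bullet> x - t * hy - js y \<le> q \<bullet> x - t * hq - js q" using y hq by (simp add: Phi_real)
    thus False using y by (simp add: F_def inner_diff_right inner_commute algebra_simps)
  qed
  obtain w b where wb: "w \<noteq> 0" "\<forall>p\<in>A. w \<bullet> p \<le> b" "\<forall>p\<in>T. w \<bullet> p \<ge> b"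
    using separating_hyperplane_sets[OF cA cT nA nT dAT] by blast
  obtain g \<beta> where w: "w = (g, \<beta>)" by (cases w)
  have hA: "g \<bullet> y + \<beta> * r \<le> b" if "H y = ereal hy" "F y hy \<le> r" for y hy r
  proof -
    have "(y, r) \<in> A" using that by (auto simp: A_def)
    thus ?thesis using wb(2) w by (auto simp: inner_Pair inner_real_def)
  qed
  have hT: "g \<bullet> y + \<beta> * r \<ge> b" if "r < js q - js y" for y r
  proof -
    have "(y, r) \<in> T" using that by (simp add: T_def)
    thus ?thesis using wb(3) w by (auto simp: inner_Pair inner_real_def)
  qed
  have Fq: "F q hq = 0" by (simp add: F_def)
  have b0: "\<beta> < 0"
  proof (rule ccontr)
    assume "\<not> \<beta> < 0"
    show False
    proof (cases "\<beta> = 0")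
      case True
      hence g0: "g \<noteq> 0" using wb(1) w by (auto simp: zero_prod_def)
      have "g \<bullet> (q - g) \<ge> b" using hT[of "js q - js (q - g) - 1" "q - g"] True by simp
      moreover have "g \<bullet> q \<le> b" using hA[OF hq, of 0] Fq True by simp
      moreover have "g \<bullet> g > 0" using g0 by simp
      ultimately show False by (simp add: inner_diff_right)
    next
      case False
      hence bp: "\<beta> > 0" using \<open>\<not> \<beta> < 0\<close> by simp
      define r where "r = (\<bar>b - g \<bullet> q\<bar> + 1)/\<beta>"
      have "r > 0" using bp by (simp add: r_def add_pos_nonneg)
      hence "g \<bullet> q + \<beta> * r \<le> b" using hA[OF hq, of r] Fq by simp
      moreover have "\<beta> * r = \<bar>b - g \<bullet> q\<bar> + 1" using bp by (simp add: r_def)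
      ultimately show False by linarith
    qed
  qed
  define \<gamma> where "\<gamma> = -\<beta>"
  have \<gamma>: "\<gamma> > 0" using b0 by (simp add: \<gamma>_def)
  define c where "c = (1/\<gamma>) *\<^sub>R g"
  define L where "L y = (g \<bullet> y - b)/\<gamma>" for y
  have LA: "L y \<le> F y hy" if "H y = ereal hy" for y hy
  proof -
    have "g \<bullet> y - \<gamma> * F y hy \<le> b" using hA[OF that order.refl] by (simp add: \<gamma>_def)
    thus ?thesis using \<gamma> by (simp add: L_def pos_divide_le_eq mult.commute)
  qed
  have LT: "js q - js y \<le> L y" for y
  proof (rule dense_le)
    fix r assume "r < js q - js y"
    hence "g \<bullet> y - \<gamma> * r \<ge> b" using hT by (simp add: \<gamma>_def)
    thus "r \<le> L y" using \<gamma> by (simp add: L_def pos_le_divide_eq mult.commute)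
  qed
  have Lq: "L q = 0" using LA[OF hq] LT[of q] Fq by simp
  have Lc: "L y = c \<bullet> (y - q)" for y
  proof -
    have "L y = L y - L q" using Lq by simp
    also have "\<dots> = c \<bullet> (y - q)" by (simp add: L_def c_def inner_diff_right diff_divide_distrib)
    finally show ?thesis .
  qed
  show ?thesis
  proof (rule that)
    show "(1/t) *\<^sub>R (x + c) \<in> subdiff H q"
      unfolding subdiff_def
    proof (intro CollectI conjI allI)
      show "q \<in> edom H" using hq by (simp add: edom_def)
      fix y
      show "H q + ereal ((1/t) *\<^sub>R (x + c) \<bullet> (y - q)) \<le> H y"
      proof (cases "H y")
        case (real hy)
        have "c \<bullet> (y - q) \<le> t * (hy - hq) - x \<bullet> (y - q)" using LA[OF real] Lc by (simp add: F_def)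
        hence "(x + c) \<bullet> (y - q) \<le> t * (hy - hq)" by (simp add: inner_add_left)
        hence "(1/t) * ((x + c) \<bullet> (y - q)) \<le> hy - hq" using t by (simp add: field_simps)
        thus ?thesis using real hq by simp
      qed (use H_nm in auto)
    qed
    fix y show "js q - c \<bullet> (y - q) \<le> js y" using LT[of y] Lc[of y] by simp
  qed
qed

end


context setting begin

lemma Leg_bd: "x \<in> edom H \<Longrightarrow> subdiff H x \<noteq> {} \<Longrightarrow> x \<in> interior (edom H)"
  using LH by (auto simp: Legendre_def)

lemma Leg_strict:
  assumes "x \<in> interior (edom H)" "y \<in> interior (edom H)" "x \<noteq> y" "0 < u" "u < 1"
  shows "H (u *\<^sub>R x + (1 - u) *\<^sub>R y) < ereal u * H x + ereal (1 - u) * H y"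
proof -
  have L: "\<forall>x\<in>interior (edom H). \<forall>y\<in>interior (edom H). \<forall>u::real.
           x \<noteq> y \<and> 0 < u \<and> u < 1 \<longrightarrow>
           H (u *\<^sub>R x + (1 - u) *\<^sub>R y) < ereal u * H x + ereal (1 - u) * H y"
    using LH unfolding Legendre_def by (elim conjE) assumption
  show ?thesis using L[rule_format, OF assms(1,2)] assms(3-5) by simp
qed

lemma Leg_cont:
  assumes "x \<in> interior (edom H)"
  shows "isCont (\<lambda>y. real_of_ereal (H y)) x"
proof -
  have L: "\<forall>x\<in>interior (edom H). (\<lambda>y. real_of_ereal (H y)) differentiable (at x)"
    using LH unfolding Legendre_def by (elim conjE) assumption
  show ?thesis using L[rule_format, OF assms] by (rule differentiable_imp_continuous_within)
qed

lemma int_fin: assumes "y \<in> interior (edom H)" obtains h where "H y = ereal h"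
  using assms interior_subset[of "edom H"] H_nm[of y] by (cases "H y") (auto simp: edom_def)

lemma int_conjH:
  assumes bb: "bb \<in> subdiff H q"
  shows "bb \<in> interior (edom (conj H))"
proof -
  have qd: "q \<in> edom H" using bb by (simp add: subdiff_def)
  have qi: "q \<in> interior (edom H)" using Leg_bd[OF qd] bb by blast
  obtain hq where hq: "H q = ereal hq" using int_fin[OF qi] .
  obtain R where R: "R > 0" "ball q R \<subseteq> interior (edom H)"
    using qi open_contains_ball open_interior by blast
  define G where "G y = real_of_ereal (H y) - bb \<bullet> y" for y
  have Gr: "G y = hy - bb \<bullet> y" if "H y = ereal hy" for y hy using that by (simp add: G_def)
  have sub: "hq - bb \<bullet> q \<le> hy - bb \<bullet> y" if "H y = ereal hy" for y hy
  proof -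
    have "H q + ereal (bb \<bullet> (y - q)) \<le> H y" using bb by (simp add: subdiff_def)
    thus ?thesis using that hq by (simp add: inner_diff_right)
  qed
  have strict: "hq - bb \<bullet> q < hy - bb \<bullet> y" if y: "H y = ereal hy" "y \<noteq> q" for y hy
  proof (rule ccontr)
    assume "\<not> ?thesis"
    hence eq: "hy - bb \<bullet> y = hq - bb \<bullet> q" using sub[OF y(1)] by simp
    have np: "norm (y - q) > 0" using y by simp
    define \<epsilon> where "\<epsilon> = min (1/2) (R / (2 * (norm (y - q) + 1)))"
    have den: "2 * (norm (y - q) + 1) > 0" by (smt (verit) norm_ge_zero)
    hence "R / (2 * (norm (y - q) + 1)) > 0" using R by simp
    hence \<epsilon>: "\<epsilon> > 0" "\<epsilon> \<le> 1/2" unfolding \<epsilon>_def by (auto simp: min_def)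
    define r where "r = (1 - \<epsilon>) *\<^sub>R q + \<epsilon> *\<^sub>R y"
    have rq: "r - q = \<epsilon> *\<^sub>R (y - q)" by (simp add: r_def algebra_simps)
    have "norm (r - q) < R"
    proof -
      have "norm (r - q) = \<epsilon> * norm (y - q)" using \<epsilon> rq by simp
      also have "\<dots> \<le> (R / (2 * (norm (y - q) + 1))) * norm (y - q)"
        by (intro mult_right_mono) (auto simp: \<epsilon>_def)
      also have "\<dots> = R * norm (y - q) / (2 * (norm (y - q) + 1))" by simp
      also have "\<dots> < R"
      proof -
        have "norm (y - q) < 2 * (norm (y - q) + 1)" by (smt (verit) norm_ge_zero)
        from mult_strict_left_mono[OF this R(1)] show ?thesis using den by (simp add: pos_divide_less_eq)
      qed
      finally show ?thesis .
    qed
    hence ri: "r \<in> interior (edom H)" using R by (auto simp: dist_norm norm_minus_commute)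
    have rneq: "r \<noteq> q" using rq \<epsilon> y by auto
    obtain hr where hr: "H r = ereal hr" using int_fin[OF ri] .
    have "H r \<le> ereal ((1 - \<epsilon>) * hq + \<epsilon> * hy)"
      unfolding r_def by (rule H_conv) (use hq y \<epsilon> in auto)
    hence "hr - bb \<bullet> r \<le> (1 - \<epsilon>) * (hq - bb \<bullet> q) + \<epsilon> * (hy - bb \<bullet> y)"
      using hr by (simp add: r_def inner_add_right algebra_simps)
    hence Gr_eq: "hr - bb \<bullet> r \<le> hq - bb \<bullet> q" using eq by (simp add: algebra_simps)
    define m where "m = (1/2) *\<^sub>R q + (1 - 1/2) *\<^sub>R r"
    have "H m < ereal (1/2) * H q + ereal (1 - 1/2) * H r"
      unfolding m_def by (rule Leg_strict) (use qi ri rneq in auto)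
    hence "H m < ereal ((hq + hr)/2)" using hq hr by (simp add: add_divide_distrib)
    then obtain hm where hm: "H m = ereal hm" "hm < (hq + hr)/2"
      using H_nm[of m] by (cases "H m") auto
    have "2 * hm - 2 * (bb \<bullet> m) < (hq - bb \<bullet> q) + (hr - bb \<bullet> r)"
      using hm by (simp add: m_def inner_add_right field_simps)
    moreover have "hq - bb \<bullet> q \<le> hm - bb \<bullet> m" using sub[OF hm(1)] .
    ultimately show False using Gr_eq by linarith
  qed
  define r0 where "r0 = R/2"
  have r0: "r0 > 0" using R by (simp add: r0_def)
  define K where "K = sphere q r0"
  have Ksub: "K \<subseteq> interior (edom H)" using R r0 by (auto simp: K_def r0_def)
  have Kne: "K \<noteq> {}" using r0 by (simp add: K_def)
  have cK: "continuous_on K G"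
  proof (rule continuous_at_imp_continuous_on, rule ballI)
    fix y assume "y \<in> K"
    hence "isCont (\<lambda>y. real_of_ereal (H y)) y" using Leg_cont Ksub by blast
    thus "isCont G y" unfolding G_def by (intro continuous_intros)
  qed
  obtain ym where ym: "ym \<in> K" "\<And>y. y \<in> K \<Longrightarrow> G ym \<le> G y"
    using continuous_attains_inf[OF _ Kne cK] by (auto simp: K_def)
  define m0 where "m0 = G ym"
  have "ym \<noteq> q" using ym r0 by (auto simp: K_def)
  moreover obtain hym where "H ym = ereal hym" using int_fin ym Ksub by blast
  ultimately have m0: "m0 > hq - bb \<bullet> q" using strict Gr by (simp add: m0_def)
  define \<delta> where "\<delta> = (m0 - (hq - bb \<bullet> q))/r0"
  have \<delta>: "\<delta> > 0" using m0 r0 by (simp add: \<delta>_def)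
  have growth: "hy - bb \<bullet> y \<ge> hq - bb \<bullet> q + \<delta> * norm (y - q)"
    if y: "H y = ereal hy" "norm (y - q) \<ge> r0" for y hy
  proof -
    define n where "n = norm (y - q)"
    have n: "n > 0" "n \<ge> r0" using y r0 by (auto simp: n_def)
    define lam where "lam = r0 / n"
    have lam: "lam > 0" "lam \<le> 1" using n r0 by (auto simp: lam_def)
    define w where "w = (1 - lam) *\<^sub>R q + lam *\<^sub>R y"
    have wq: "w - q = lam *\<^sub>R (y - q)" by (simp add: w_def algebra_simps)
    have "norm (w - q) = r0" using wq lam n r0 by (simp add: lam_def n_def)
    hence wK: "w \<in> K" by (simp add: K_def dist_norm norm_minus_commute)
    obtain hw where hw: "H w = ereal hw" using int_fin wK Ksub by blast
    have "H w \<le> ereal ((1 - lam) * hq + lam * hy)"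
      unfolding w_def by (rule H_conv) (use hq y lam in auto)
    hence "hw - bb \<bullet> w \<le> (1 - lam) * (hq - bb \<bullet> q) + lam * (hy - bb \<bullet> y)"
      using hw by (simp add: w_def inner_add_right algebra_simps)
    moreover have "m0 \<le> hw - bb \<bullet> w" using ym(2)[OF wK] Gr[OF hw] by (simp add: m0_def)
    ultimately have "lam * ((hy - bb \<bullet> y) - (hq - bb \<bullet> q)) \<ge> m0 - (hq - bb \<bullet> q)"
      by (simp add: algebra_simps)
    hence "(hy - bb \<bullet> y) - (hq - bb \<bullet> q) \<ge> (m0 - (hq - bb \<bullet> q)) / lam"
      using lam by (simp add: pos_divide_le_eq mult.commute)
    moreover have "(m0 - (hq - bb \<bullet> q)) / lam = \<delta> * n"
      using r0 n by (simp add: \<delta>_def lam_def field_simps)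
    ultimately show ?thesis by (simp add: n_def)
  qed
  have "ball bb \<delta> \<subseteq> edom (conj H)"
  proof
    fix v assume v: "v \<in> ball bb \<delta>"
    define w' where "w' = v - bb"
    have nw: "norm w' < \<delta>" using v by (simp add: w'_def dist_norm norm_minus_commute)
    define M where "M = w' \<bullet> q - (hq - bb \<bullet> q) + \<delta> * r0"
    have "conj H v \<le> ereal M" unfolding conj_def
    proof (rule SUP_least)
      fix y
      show "ereal (v \<bullet> y) - H y \<le> ereal M"
      proof (cases "H y")
        case (real hy)
        have e1: "v \<bullet> y - hy = w' \<bullet> q + w' \<bullet> (y - q) - (hy - bb \<bullet> y)"
          by (simp add: w'_def inner_diff_left inner_diff_right)
        have e2: "w' \<bullet> (y - q) \<le> norm w' * norm (y - q)" by (simp add: norm_cauchy_schwarz)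
        have "v \<bullet> y - hy \<le> M"
        proof (cases "norm (y - q) \<ge> r0")
          case True
          have "norm w' * norm (y - q) \<le> \<delta> * norm (y - q)" using nw by (simp add: mult_right_mono)
          moreover have "\<delta> * r0 > 0" using \<delta> r0 by simp
          ultimately show ?thesis using e1 e2 growth[OF real True] by (simp add: M_def)
        next
          case False
          have "norm w' * norm (y - q) \<le> \<delta> * r0" using nw False \<delta>
            by (intro mult_mono) auto
          thus ?thesis using e1 e2 sub[OF real] by (simp add: M_def)
        qed
        thus ?thesis using real by simp
      qed (use H_nm in auto)
    qed
    thus "v \<in> edom (conj H)" by (auto simp: edom_def)
  qed
  thus ?thesis using \<delta> mem_interior by blast
qed

lemma int_crit:
  assumes t: "t > 0" and a: "J a < \<infinity>" and bb: "bb \<in> subdiff H q" and x: "x = a + t *\<^sub>R bb"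
  shows "(x,t) \<in> interior (edom S)"
proof -
  obtain d where d: "d > 0" "ball bb d \<subseteq> edom (conj H)"
    using int_conjH[OF bb] mem_interior by blast
  define f where "f z = (1 / snd z) *\<^sub>R (fst z - a)" for z :: "'a \<times> real"
  define P where "P = {z :: 'a \<times> real. 0 < snd z}"
  have oP: "open P" unfolding P_def by (intro open_Collect_less continuous_intros)
  have cf: "continuous_on P f" unfolding f_def P_def
    by (intro continuous_intros) auto
  define U where "U = f -` ball bb d \<inter> P"
  have oU: "open U" using cf oP unfolding U_def continuous_on_open_vimage[OF oP] by auto
  have xU: "(x,t) \<in> U" using t d by (simp add: U_def P_def f_def x)
  have "U \<subseteq> edom S"
  proof
    fix z assume z: "z \<in> U"
    obtain y s where zz: "z = (y,s)" by (cases z)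
    have s: "s > 0" using z zz by (simp add: U_def P_def)
    define v where "v = f z"
    have "conj H v < \<infinity>" using z d by (auto simp: U_def v_def edom_def)
    moreover have "y = a + s *\<^sub>R v" using s by (simp add: v_def f_def zz)
    ultimately have "S (a + s *\<^sub>R v, s) < \<infinity>"
      using S_ub[OF s, of a v] a s by (cases "J a"; cases "conj H v") auto
    thus "z \<in> edom S" using zz \<open>y = a + s *\<^sub>R v\<close> by (simp add: edom_def)
  qed
  thus ?thesis using oU xU interior_maximal by blast
qed

end


context setting begin

lemma max_data:
  assumes t: "t > 0" and hq: "H q = ereal hq" and mx: "\<And>p. Phi x t p \<le> Phi x t q"
  shows "(x,t) \<in> interior (edom S)" "q \<in> interior (edom H)"
proof -
  obtain c where bb: "(1/t) *\<^sub>R (x + c) \<in> subdiff H q" and jc: "\<And>y. js q - c \<bullet> (y - q) \<le> js y"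
    using sumrule[OF t hq mx] by blast
  have "subdiff H q \<noteq> {}" using bb by blast
  moreover have "q \<in> edom H" using hq by (simp add: edom_def)
  ultimately show "q \<in> interior (edom H)" using Leg_bd by blast
  define a where "a = - c"
  have "a \<in> subdiff (conj J) q"
    unfolding subdiff_def using jc by (auto simp: conjJ edom_def a_def inner_minus_left)
  hence "conj (conj J) a \<le> ereal (a \<bullet> q - js q)" using subgrad_conj conjJ by blast
  hence "J a \<le> ereal (a \<bullet> q - js q)" using biconj_ge[OF GJ, of a] by (rule order_trans[rotated])
  hence "J a < \<infinity>" by (rule order_le_less_trans) simp
  moreover have "x = a + t *\<^sub>R ((1/t) *\<^sub>R (x + c))" using t by (simp add: a_def)
  ultimately show "(x,t) \<in> interior (edom S)" using int_crit[OF t _ bb] by blast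
qed

lemma unique:
  assumes t: "t > 0" and i1: "p1 \<in> interior (edom H)" and i2: "p2 \<in> interior (edom H)"
    and m1: "\<And>p. Phi x t p \<le> Phi x t p1" and m2: "\<And>p. Phi x t p \<le> Phi x t p2"
  shows "p1 = p2"
proof (rule ccontr)
  assume ne: "p1 \<noteq> p2"
  obtain h1 where h1: "H p1 = ereal h1" using int_fin[OF i1] .
  obtain h2 where h2: "H p2 = ereal h2" using int_fin[OF i2] .
  define m where "m = (1/2) *\<^sub>R p1 + (1 - 1/2) *\<^sub>R p2"
  have "H m < ereal (1/2) * H p1 + ereal (1 - 1/2) * H p2"
    unfolding m_def by (rule Leg_strict) (use i1 i2 ne in auto)
  hence "H m < ereal (h1/2 + h2/2)" using h1 h2 by simp
  then obtain hm where hm: "H m = ereal hm" "2 * hm < h1 + h2" using H_nm[of m] by (cases "H m") auto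
  have "js ((1 - 1/2) *\<^sub>R p1 + (1/2) *\<^sub>R p2) \<le> (1 - 1/2) * js p1 + (1/2) * js p2"
    by (rule convex_onD[OF js_convex]) auto
  hence jm: "2 * js m \<le> js p1 + js p2" by (simp add: m_def)
  have mx: "2 * (m \<bullet> x) = p1 \<bullet> x + p2 \<bullet> x" by (simp add: m_def inner_add_left)
  have th: "2 * (t * hm) < t * h1 + t * h2"
    using mult_strict_left_mono[OF hm(2) t] by (simp add: algebra_simps)
  have e1: "p2 \<bullet> x - t * h2 - js p2 \<le> p1 \<bullet> x - t * h1 - js p1" using m1[of p2] h1 h2 by (simp add: Phi_real)
  have e2: "p1 \<bullet> x - t * h1 - js p1 \<le> p2 \<bullet> x - t * h2 - js p2" using m2[of p1] h1 h2 by (simp add: Phi_real)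
  have e3: "m \<bullet> x - t * hm - js m \<le> p1 \<bullet> x - t * h1 - js p1" using m1[of m] h1 hm by (simp add: Phi_real)
  show False using e1 e2 e3 jm mx th by linarith
qed

lemma sub_pos:
  assumes t: "t > 0" and Sx: "S (x,t) = ereal Sx" and sd: "(q,E) \<in> subdiff S (x,t)"
  shows "H q = ereal (-E)" "\<And>p. Phi x t p \<le> Phi x t q"
proof -
  have sg: "S (x,t) + ereal (q \<bullet> (y - x) + E * (s - t)) \<le> S (y,s)" if "s > 0" for y s
  proof -
    have "S (x,t) + ereal ((q,E) \<bullet> ((y,s) - (x,t))) \<le> S (y,s)" using sd unfolding subdiff_def by blast
    thus ?thesis by (simp add: inner_Pair inner_real_def)
  qed
  have hq: "H q \<le> ereal (-E)" and jq: "js q \<le> q \<bullet> x + E * t - Sx" using L_fwd[OF Sx sg] by blast+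
  obtain h where h: "H q = ereal h" using hq H_nm[of q] by (cases "H q") auto
  have "Phi x t q \<le> S (x,t)" using Phi_le[OF t] .
  hence "q \<bullet> x - t * h - js q \<le> Sx" using h Sx by (simp add: Phi_real)
  hence "- (t * h) \<le> t * E" using jq mult.commute[of E t] by linarith
  hence "t * (-h) \<le> t * E" by simp
  hence "-h \<le> E" using t mult_le_cancel_left_pos[of t "-h" E] by simp
  moreover have "h \<le> -E" using hq h by simp
  ultimately have hE: "h = -E" by simp
  thus "H q = ereal (-E)" using h by simp
  fix p
  have "Phi x t p \<le> S (x,t)" using Phi_le[OF t] .
  also have "\<dots> \<le> Phi x t q" using Sx h hE jq mult.commute[of E t] by (simp add: Phi_real)
  finally show "Phi x t p \<le> Phi x t q" .
qed

definition g0 where "g0 p = conj J p + indicator_fun (edom H) p"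

lemma g0_le: "g0 y \<le> ereal r \<longleftrightarrow> H y < \<infinity> \<and> js y \<le> r"
  by (simp add: g0_def conjJ indicator_fun_def edom_def)

lemma g0_convex: "convex_fun g0"
  unfolding convex_fun_def convex_def
proof (intro ballI allI impI)
  fix p1 p2 :: "'a \<times> real" and u v :: real
  assume p: "p1 \<in> epigraph g0" "p2 \<in> epigraph g0" and uv: "0 \<le> u" "0 \<le> v" "u + v = 1"
  obtain y1 r1 y2 r2 where pp: "p1 = (y1,r1)" "p2 = (y2,r2)" by (cases p1, cases p2)
  have a: "H y1 < \<infinity>" "js y1 \<le> r1" "H y2 < \<infinity>" "js y2 \<le> r2"
    using p pp by (auto simp: epigraph_def g0_le)
  obtain h1 where h1: "H y1 = ereal h1" using a H_nm[of y1] by (cases "H y1") auto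
  obtain h2 where h2: "H y2 = ereal h2" using a H_nm[of y2] by (cases "H y2") auto
  note h = h1 h2
  have u: "u = 1 - v" using uv by simp
  have "H (u *\<^sub>R y1 + v *\<^sub>R y2) \<le> ereal (u * h1 + v * h2)"
    using H_conv[of y1 h1 y2 h2 v] h uv unfolding u by simp
  hence 1: "H (u *\<^sub>R y1 + v *\<^sub>R y2) < \<infinity>" by (rule order_le_less_trans) simp
  have "js (u *\<^sub>R y1 + v *\<^sub>R y2) \<le> u * js y1 + v * js y2"
    using convex_onD[OF js_convex, of v y1 y2] uv unfolding u by simp
  also have "\<dots> \<le> u * r1 + v * r2" using a uv by (intro add_mono mult_left_mono) auto
  finally show "u *\<^sub>R p1 + v *\<^sub>R p2 \<in> epigraph g0" using 1 pp by (simp add: epigraph_def g0_le)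
qed

lemma g0_lsc: assumes "H p < \<infinity>" shows "g0 p \<le> Liminf (at p) g0"
proof -
  have gp: "g0 p = ereal (js p)" using assms by (simp add: g0_def conjJ indicator_fun_def edom_def)
  have "isCont js p" using js_cont by (simp add: continuous_on_eq_continuous_at)
  hence lim: "((\<lambda>z. ereal (js z)) \<longlongrightarrow> ereal (js p)) (at p)" by (simp add: isCont_def)
  show ?thesis unfolding le_Liminf_iff
  proof (intro allI impI)
    fix y assume "y < g0 p"
    hence "eventually (\<lambda>z. y < ereal (js z)) (at p)" using order_tendstoD(1)[OF lim] gp by simp
    moreover have "ereal (js z) \<le> g0 z" for z by (simp add: g0_def conjJ indicator_fun_def)
    ultimately show "eventually (\<lambda>z. y < g0 z) (at p)"
      by (elim eventually_mono) (meson less_le_trans)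
  qed
qed

lemma zero_back:
  assumes Sx: "S (x,0) = ereal Sx" and hp: "H p < \<infinity>"
    and sd: "p \<in> subdiff (\<lambda>y. S (y,0)) x"
  shows "js p \<le> p \<bullet> x - Sx"
proof (rule dense_le)
  fix r assume r: "r < js p"
  have gp: "g0 p = ereal (js p)" using hp by (simp add: g0_def conjJ indicator_fun_def edom_def)
  obtain a c where "\<forall>y. ereal (a \<bullet> y + c) \<le> g0 y" "r < a \<bullet> p + c"
    using FM1[OF g0_convex g0_lsc[OF hp] gp r] by blast
  hence "ereal r < conj (conj g0) p" by (rule biconj_gt)
  moreover have "conj (conj g0) p \<le> ereal (p \<bullet> x - Sx)"
    unfolding conj_def[of "conj g0" p]
  proof (rule SUP_least)
    fix y
    have cy: "conj g0 y = S (y,0)" by (simp add: S_zero g0_def[abs_def])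
    have "S (x,0) + ereal (p \<bullet> (y - x)) \<le> S (y,0)" using sd by (simp add: subdiff_def)
    thus "ereal (p \<bullet> y) - conj g0 y \<le> ereal (p \<bullet> x - Sx)"
      unfolding cy using Sx S_nm[of "(y,0)"] by (cases "S (y,0)") (auto simp: inner_diff_right)
  qed
  ultimately have "ereal r < ereal (p \<bullet> x - Sx)" by (rule less_le_trans)
  thus "r \<le> p \<bullet> x - Sx" by simp
qed

end


context setting begin

lemma sg_of_subdiff:
  assumes "(q,E) \<in> subdiff S (x,t)" "s > 0"
  shows "S (x,t) + ereal (q \<bullet> (y - x) + E * (s - t)) \<le> S (y,s)"
proof -
  have "S (x,t) + ereal ((q,E) \<bullet> ((y,s) - (x,t))) \<le> S (y,s)" using assms unfolding subdiff_def by blast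
  thus ?thesis by (simp add: inner_Pair inner_real_def)
qed

theorem main_loc:
  assumes dom: "(x, t) \<in> edom (Sfun J H)"
  shows "((x, t) \<in> interior (edom (Sfun J H)) \<longrightarrow>
            (\<exists>pbar.
               (\<forall>q. ereal (inner q x) - ereal t * H q - conj J q
                      \<le> ereal (inner pbar x) - ereal t * H pbar - conj J pbar)
             \<and> (\<forall>p. (\<forall>q. ereal (inner q x) - ereal t * H q - conj J q
                          \<le> ereal (inner p x) - ereal t * H p - conj J p) \<longrightarrow> p = pbar)
             \<and> H pbar < \<infinity>
             \<and> subdiff (Sfun J H) (x, t) = {(pbar, - real_of_ereal (H pbar))}))
       \<and> (t = 0 \<longrightarrow>
            subdiff (Sfun J H) (x, t) =
              {(p, E). p \<in> subdiff (\<lambda>y. Sfun J H (y, 0)) x \<and> p \<in> edom H \<and> ereal E \<le> - H p})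
       \<and> (t > 0 \<and> (x, t) \<notin> interior (edom (Sfun J H)) \<longrightarrow>
            subdiff (Sfun J H) (x, t) = {})"
  unfolding Phi_def[symmetric]
proof (intro conjI impI)
  obtain Sx where Sx: "S (x,t) = ereal Sx" using S_fin[OF dom] .
  {
    assume int: "(x, t) \<in> interior (edom S)"
    have tp: "t > 0" using int_t_pos[OF int] .
    obtain c E where sg: "\<And>y s. s > 0 \<Longrightarrow> S (x,t) + ereal (c \<bullet> (y - x) + E * (s - t)) \<le> S (y,s)"
      using int_subgrad[OF int] by blast
    have hc: "H c \<le> ereal (-E)" and jc: "js c \<le> c \<bullet> x + E * t - Sx" using L_fwd[OF Sx sg] by blast+
    obtain hcr where hcr: "H c = ereal hcr" using hc H_nm[of c] by (cases "H c") auto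
    have "t * hcr \<le> t * (-E)" using hc hcr tp by (intro mult_left_mono) auto
    hence PhiC: "Sx \<le> c \<bullet> x - t * hcr - js c" using jc mult.commute[of E t] by simp
    have maxc: "Phi x t q \<le> Phi x t c" for q
    proof -
      have "Phi x t q \<le> S (x,t)" using Phi_le[OF tp] .
      also have "\<dots> \<le> Phi x t c" using Sx PhiC hcr by (simp add: Phi_real)
      finally show ?thesis .
    qed
    have ci: "c \<in> interior (edom H)" using max_data(2)[OF tp hcr maxc] .
    have uniq: "p = c" if mp: "\<forall>q. Phi x t q \<le> Phi x t p" for p
    proof -
      have "H p \<noteq> \<infinity>"
      proof
        assume "H p = \<infinity>"
        hence "Phi x t p = -\<infinity>" using tp by (simp add: Phi_def conjJ)
        moreover have "Phi x t c \<le> Phi x t p" using mp by blast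
        ultimately show False using hcr by (simp add: Phi_real)
      qed
      then obtain hp where hp: "H p = ereal hp" using H_nm[of p] by (cases "H p") auto
      have pi: "p \<in> interior (edom H)" using max_data(2)[OF tp hp] mp by blast
      show ?thesis using unique[OF tp pi ci] mp maxc by blast
    qed
    have sd: "subdiff S (x, t) = {(c, - real_of_ereal (H c))}"
    proof
      show "subdiff S (x, t) \<subseteq> {(c, - real_of_ereal (H c))}"
      proof
        fix z assume z: "z \<in> subdiff S (x,t)"
        obtain q E' where zz: "z = (q,E')" by (cases z)
        have hq: "H q = ereal (-E')" and mq: "\<And>p. Phi x t p \<le> Phi x t q"
          using sub_pos[OF tp Sx] z zz by blast+
        have "q = c" using uniq mq by blast
        thus "z \<in> {(c, - real_of_ereal (H c))}" using zz hq by simp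
      qed
    next
      have "Sx + js c \<le> c \<bullet> x + (-hcr) * t" using PhiC by (simp add: algebra_simps)
      hence "(c, -hcr) \<in> subdiff S (x,t)"
        by (intro L_back[OF _ Sx]) (use hcr tp in auto)
      thus "{(c, - real_of_ereal (H c))} \<subseteq> subdiff S (x, t)" using hcr by simp
    qed
    show "\<exists>pbar. (\<forall>q. Phi x t q \<le> Phi x t pbar) \<and> (\<forall>p. (\<forall>q. Phi x t q \<le> Phi x t p) \<longrightarrow> p = pbar)
             \<and> H pbar < \<infinity> \<and> subdiff S (x, t) = {(pbar, - real_of_ereal (H pbar))}"
      using maxc uniq hcr sd by (intro exI[of _ c]) auto
  }
  {
    assume t0: "t = 0"
    show "subdiff S (x, t) = {(p, E). p \<in> subdiff (\<lambda>y. S (y, 0)) x \<and> p \<in> edom H \<and> ereal E \<le> - H p}"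
    proof
      show "subdiff S (x, t) \<subseteq> {(p, E). p \<in> subdiff (\<lambda>y. S (y, 0)) x \<and> p \<in> edom H \<and> ereal E \<le> - H p}"
      proof
        fix z assume z: "z \<in> subdiff S (x,t)"
        obtain p E' where zz: "z = (p,E')" by (cases z)
        have sg: "S (x,t) + ereal (p \<bullet> (y - x) + E' * (s - t)) \<le> S (y,s)" if "s > 0" for y s
          using sg_of_subdiff z zz that by blast
        have hp: "H p \<le> ereal (-E')" and jp: "js p \<le> p \<bullet> x + E' * t - Sx" using L_fwd[OF Sx sg] by blast+
        obtain h where h: "H p = ereal h" using hp H_nm[of p] by (cases "H p") auto
        have "p \<in> subdiff (\<lambda>y. S (y, 0)) x"
          unfolding subdiff_def
        proof (intro CollectI conjI allI)
          show "x \<in> edom (\<lambda>y. S (y, 0))" using Sx t0 by (simp add: edom_def)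
          fix y
          have "ereal (p \<bullet> y - 0 * h - js p) \<le> S (y,0)" using weak[OF h, of 0 y] by simp
          moreover have "Sx + p \<bullet> (y - x) \<le> p \<bullet> y - 0 * h - js p" using jp t0 by (simp add: inner_diff_right)
          ultimately show "S (x, 0) + ereal (p \<bullet> (y - x)) \<le> S (y, 0)" using Sx t0
            by (metis ereal_less_eq(3) order_trans plus_ereal.simps(1))
        qed
        moreover have "p \<in> edom H" using h by (simp add: edom_def)
        moreover have "ereal E' \<le> - H p" using hp h by simp
        ultimately show "z \<in> {(p, E). p \<in> subdiff (\<lambda>y. S (y, 0)) x \<and> p \<in> edom H \<and> ereal E \<le> - H p}"
          using zz by simp
      qed
    next
      show "{(p, E). p \<in> subdiff (\<lambda>y. S (y, 0)) x \<and> p \<in> edom H \<and> ereal E \<le> - H p} \<subseteq> subdiff S (x, t)"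
      proof
        fix z assume z: "z \<in> {(p, E). p \<in> subdiff (\<lambda>y. S (y, 0)) x \<and> p \<in> edom H \<and> ereal E \<le> - H p}"
        obtain p E' where zz: "z = (p,E')" by (cases z)
        have sd: "p \<in> subdiff (\<lambda>y. S (y, 0)) x" and pd: "H p < \<infinity>" and Ep: "ereal E' \<le> - H p"
          using z zz by (auto simp: edom_def)
        obtain h where h: "H p = ereal h" using pd H_nm[of p] by (cases "H p") auto
        have S0: "S (x,0) = ereal Sx" using Sx t0 by simp
        have jp: "js p \<le> p \<bullet> x - Sx" using zero_back[OF S0 pd sd] .
        have "(p, E') \<in> subdiff S (x,0)"
          by (rule L_back[OF _ S0]) (use h Ep jp in auto)
        thus "z \<in> subdiff S (x, t)" using zz t0 by simp
      qed
    qed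
  }
  {
    assume a: "t > 0 \<and> (x, t) \<notin> interior (edom S)"
    show "subdiff S (x, t) = {}"
    proof (rule ccontr)
      assume "subdiff S (x, t) \<noteq> {}"
      then obtain q E' where z: "(q,E') \<in> subdiff S (x,t)" by auto
      have hq: "H q = ereal (-E')" and mq: "\<And>p. Phi x t p \<le> Phi x t q"
        using sub_pos[OF _ Sx z] a by blast+
      have "(x,t) \<in> interior (edom S)" using max_data(1)[OF _ hq mq] a by blast
      thus False using a by blast
    qed
  }
qed

end

theorem mainTheorem6:
  fixes J H :: "real ^ 'n \<Rightarrow> ereal" and x :: "real ^ 'n" and t :: real
  assumes A1: "Gamma0 J" "Gamma0 H" "one_coercive J" "Legendre H"
    and dom: "(x, t) \<in> edom (Sfun J H)"
  shows "((x, t) \<in> interior (edom (Sfun J H)) \<longrightarrow>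
            (\<exists>pbar.
               (\<forall>q. ereal (inner q x) - ereal t * H q - conj J q
                      \<le> ereal (inner pbar x) - ereal t * H pbar - conj J pbar)
             \<and> (\<forall>p. (\<forall>q. ereal (inner q x) - ereal t * H q - conj J q
                          \<le> ereal (inner p x) - ereal t * H p - conj J p) \<longrightarrow> p = pbar)
             \<and> H pbar < \<infinity>
             \<and> subdiff (Sfun J H) (x, t) = {(pbar, - real_of_ereal (H pbar))}))
       \<and> (t = 0 \<longrightarrow>
            subdiff (Sfun J H) (x, t) =
              {(p, E). p \<in> subdiff (\<lambda>y. Sfun J H (y, 0)) x \<and> p \<in> edom H \<and> ereal E \<le> - H p})
       \<and> (t > 0 \<and> (x, t) \<notin> interior (edom (Sfun J H)) \<longrightarrow>
            subdiff (Sfun J H) (x, t) = {})"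
proof -
  interpret setting J H using A1 by unfold_locales
  show ?thesis using main_loc[OF dom] .
qed


end
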